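(* Let $d\ge2$ and $n\ge2$ be integers and let $W=W(D_{n,d};q)$. Then the coefficient sequence $([q^i]W)_{i\ge0}$ is unimodal. Moreover, if $k\ge0$ and $n_k\le n<p_k$, then $[q^{2k}]W$ or $[q^{2k+1}]W$ is a maximum coefficient; if $p_k\le n<n_{k+1}$, then $[q^{2k+2}]W$ is a maximum coefficient and the coefficient sequence is weakly increasing (up to degree $2k+2$).
   Context: For a connected graph $G$, $W(G;q)=\sum_{\{u,v\}}q^{d(u,v)}$ over unordered pairs of distinct vertices, $d$ the graph distance; $[q^i]f$ is the coefficient of $q^i$ in $f$. A sequence $(a_m)_{m\ge0}$ is unimodal if for some index $j$, $a_0\le a_1\le\cdots\le a_j\ge a_{j+1}\ge a_{j+2}\ge\cdots$. The $d$-ary dendrimer $D_{n,d}$ is the tree on vertex set $\{1,\ldots,n\}$ defined inductively: $D_{1,d}$ is the single vertex $1$, and $D_{n,d}$ is obtained from $D_{n-1,d}$ by attaching a new leaf $n$ to the smallest-numbered vertex of $D_{n-1,d}$ having degree $\le d$. Define $n_k=2+(d+1)\frac{d^k-1}{d-1}$, $m_k=3+2d\frac{d^k-1}{d-1}$ and $p_k=m_k+2d^k-1$ for $k\ge0$. *)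

theory Defs
  imports "HOL-Computational_Algebra.Polynomial"
begin

definition gdeg :: "nat set set \<Rightarrow> nat \<Rightarrow> nat" where
  "gdeg E v = card {e \<in> E. v \<in> e}"

fun dendrimer_edges :: "nat \<Rightarrow> nat \<Rightarrow> nat set set" where
  "dendrimer_edges d 0 = {}"
| "dendrimer_edges d (Suc 0) = {}"
| "dendrimer_edges d (Suc (Suc m)) =
     (let E = dendrimer_edges d (Suc m);
          p = (LEAST v. v \<in> {1..Suc m} \<and> gdeg E v \<le> d)
      in insert {p, Suc (Suc m)} E)"

definition adj_rel :: "nat set set \<Rightarrow> (nat \<times> nat) set" where
  "adj_rel E = {(u, v). {u, v} \<in> E \<and> u \<noteq> v}"

definition gdist :: "nat set set \<Rightarrow> nat \<Rightarrow> nat \<Rightarrow> nat" where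
  "gdist E u v = (LEAST k. (u, v) \<in> (adj_rel E) ^^ k)"

definition wiener_poly :: "nat set \<Rightarrow> nat set set \<Rightarrow> nat poly" where
  "wiener_poly V E = (\<Sum>(u, v) \<in> {(u, v). u \<in> V \<and> v \<in> V \<and> u < v}. monom 1 (gdist E u v))"

definition dendrimer_W :: "nat \<Rightarrow> nat \<Rightarrow> nat poly" where
  "dendrimer_W n d = wiener_poly {1..n} (dendrimer_edges d n)"

definition unimodal :: "(nat \<Rightarrow> 'a::linorder) \<Rightarrow> bool" where
  "unimodal a \<longleftrightarrow> (\<exists>j. (\<forall>i<j. a i \<le> a (Suc i)) \<and> (\<forall>i\<ge>j. a (Suc i) \<le> a i))"

definition is_max_coeff :: "nat poly \<Rightarrow> nat \<Rightarrow> bool" where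
  "is_max_coeff p i \<longleftrightarrow> (\<forall>m. coeff p m \<le> coeff p i)"

definition nk :: "nat \<Rightarrow> nat \<Rightarrow> nat" where
  "nk d k = 2 + (d + 1) * ((d ^ k - 1) div (d - 1))"

definition mk :: "nat \<Rightarrow> nat \<Rightarrow> nat" where
  "mk d k = 3 + 2 * d * ((d ^ k - 1) div (d - 1))"

definition pk :: "nat \<Rightarrow> nat \<Rightarrow> nat" where
  "pk d k = mk d k + 2 * d ^ k - 1"

end

theory Submission
  imports Defs
begin

definition par :: "nat \<Rightarrow> nat \<Rightarrow> nat" where
  "par d x = max 1 ((x + d - 3) div d)"

lemma par_less: "2 \<le> x \<Longrightarrow> par d x < x"
proof -
  assume x: "2 \<le> x"
  have "(x + d - 3) div d < x"
  proof (cases "d = 0")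
    case True then show ?thesis using x by simp
  next
    case False
    have "x + d - 3 < d * x" using x False
      by (cases x; cases d) (auto simp: algebra_simps)
    then show ?thesis using False by (simp add: div_less_iff_less_mult mult.commute)
  qed
  then show ?thesis using x by (simp add: par_def)
qed

lemma par_ge1: "1 \<le> par d x" by (simp add: par_def)

lemma par_mono: "x \<le> y \<Longrightarrow> par d x \<le> par d y"
  unfolding par_def by (intro max.mono div_le_mono) auto

function Dst :: "nat \<Rightarrow> nat \<Rightarrow> nat \<Rightarrow> nat" where
  "Dst d u v = (if u = v then 0 else if v < u then (if u \<le> 1 then 0 else Suc (Dst d (par d u) v))
     else (if v \<le> 1 then 0 else Suc (Dst d u (par d v))))"
  by auto
termination
  by (relation "measure (\<lambda>(d,u,v). u + v)") (auto intro!: par_less)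

declare Dst.simps[simp del]

lemma Dst_sym: "Dst d u v = Dst d v u"
proof (induction d u v rule: Dst.induct)
  case (1 d u v)
  show ?case
    using 1 by (subst (1 2) Dst.simps) auto
qed

lemma Dst_refl[simp]: "Dst d u u = 0"
  by (simp add: Dst.simps)

lemma Dst_gt: "v < u \<Longrightarrow> 2 \<le> u \<Longrightarrow> Dst d u v = Suc (Dst d (par d u) v)"
  by (subst Dst.simps) auto

lemma Dst_lt: "u < v \<Longrightarrow> 2 \<le> v \<Longrightarrow> Dst d u v = Suc (Dst d u (par d v))"
  by (subst Dst.simps) auto

lemma Dst_par: "2 \<le> x \<Longrightarrow> 1 \<le> w \<Longrightarrow> Dst d (par d x) w = Suc (Dst d x w) \<or> Dst d x w = Suc (Dst d (par d x) w)"
proof (induction w arbitrary: x rule: less_induct)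
  case (less w)
  have px: "par d x < x" "1 \<le> par d x" using less.prems par_less par_ge1 by auto
  show ?case
  proof (cases "w < x")
    case True then show ?thesis using less.prems by (simp add: Dst_gt)
  next
    case False
    show ?thesis
    proof (cases "w = x")
      case True then show ?thesis using px less.prems by (simp add: Dst_lt)
    next
      case False
      then have wx: "x < w" using \<open>\<not> w < x\<close> by simp
      have w2: "2 \<le> w" using wx less.prems by simp
      have "Dst d x w = Suc (Dst d x (par d w))" using wx w2 by (simp add: Dst_lt)
      moreover have "Dst d (par d x) w = Suc (Dst d (par d x) (par d w))" using wx px w2 by (simp add: Dst_lt)
      moreover have "Dst d (par d x) (par d w) = Suc (Dst d x (par d w)) \<or> Dst d x (par d w) = Suc (Dst d (par d x) (par d w))"
        using less.IH[of "par d w" x] par_less[OF w2] par_ge1 less.prems by auto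
      ultimately show ?thesis by auto
    qed
  qed
qed

lemma par_eq1: "2 \<le> d \<Longrightarrow> 2 \<le> x \<Longrightarrow> par d x = 1 \<longleftrightarrow> x \<le> d + 2"
proof -
  assume d: "2 \<le> d" and x: "2 \<le> x"
  have "(x + d - 3) div d \<le> 1 \<longleftrightarrow> x + d - 3 < 2 * d"
    using d less_eq_div_iff_mult_less_eq[of d 2 "x + d - 3"] by auto
  then show ?thesis using d x unfolding par_def by auto
qed

lemma div_eq_iff_nat: "0 < (b::nat) \<Longrightarrow> a div b = q \<longleftrightarrow> q * b \<le> a \<and> a < Suc q * b"
proof -
  assume b: "0 < b"
  have "a div b = q \<longleftrightarrow> q \<le> a div b \<and> \<not> Suc q \<le> a div b" by arith
  then show ?thesis using less_eq_div_iff_mult_less_eq[OF b, of q a] less_eq_div_iff_mult_less_eq[OF b, of "Suc q" a]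
    by auto
qed

lemma par_eqv: "2 \<le> d \<Longrightarrow> 2 \<le> v \<Longrightarrow> par d x = v \<longleftrightarrow> d * (v - 1) + 3 \<le> x \<and> x \<le> d * (v - 1) + d + 2"
proof -
  assume d: "2 \<le> d" and v: "2 \<le> v"
  have "par d x = v \<longleftrightarrow> (x + d - 3) div d = v" using v unfolding par_def by auto
  also have "\<dots> \<longleftrightarrow> v * d \<le> x + d - 3 \<and> x + d - 3 < Suc v * d"
    using d by (simp add: div_eq_iff_nat)
  also have "\<dots> \<longleftrightarrow> d * (v - 1) + 3 \<le> x \<and> x \<le> d * (v - 1) + d + 2"
  proof -
    obtain w where w: "v = Suc (Suc w)" using v by (metis add_2_eq_Suc le_Suc_ex)
    show ?thesis using d unfolding w by (auto simp: algebra_simps)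
  qed
  finally show ?thesis .
qed

lemma children_eq1: "2 \<le> d \<Longrightarrow> {x. 2 \<le> x \<and> par d x = 1} = {2..d+2}"
  using par_eq1[of d] by (auto simp del: One_nat_def)

lemma children_eqv: "2 \<le> d \<Longrightarrow> 2 \<le> v \<Longrightarrow> {x. 2 \<le> x \<and> par d x = v} = {d * (v - 1) + 3 .. d * (v - 1) + d + 2}"
  using par_eqv by auto

lemma card_children: "2 \<le> d \<Longrightarrow> 1 \<le> v \<Longrightarrow> card {x. 2 \<le> x \<and> par d x = v} = (if v = 1 then d + 1 else d)"
  by (cases "v = 1") (auto simp: children_eq1 children_eqv simp del: One_nat_def)

lemma finite_children: "2 \<le> d \<Longrightarrow> 1 \<le> v \<Longrightarrow> finite {x. 2 \<le> x \<and> par d x = v}"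
  by (cases "v = 1") (auto simp: children_eq1 children_eqv simp del: One_nat_def)

definition Ed :: "nat \<Rightarrow> nat \<Rightarrow> nat set set" where
  "Ed d n = (\<lambda>x. {par d x, x}) ` {2..n}"

lemma edge_inj: "inj_on (\<lambda>x. {par d x, x}) {x. 2 \<le> x}"
proof (rule inj_onI)
  fix x y assume x: "x \<in> {x. 2 \<le> x}" and y: "y \<in> {x. 2 \<le> x}" and e: "{par d x, x} = {par d y, y}"
  have "par d x < x" "par d y < y" using x y par_less by auto
  then show "x = y" using e by (auto simp: doubleton_eq_iff)
qed

lemma gdeg_Ed: "gdeg (Ed d n) v = card {x \<in> {2..n}. par d x = v} + (if 2 \<le> v \<and> v \<le> n then 1 else 0)"
proof -
  have "{e \<in> Ed d n. v \<in> e} = (\<lambda>x. {par d x, x}) ` {x \<in> {2..n}. par d x = v \<or> x = v}"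
    unfolding Ed_def by auto
  moreover have "inj_on (\<lambda>x. {par d x, x}) {x \<in> {2..n}. par d x = v \<or> x = v}"
    by (rule inj_on_subset[OF edge_inj]) auto
  ultimately have "gdeg (Ed d n) v = card {x \<in> {2..n}. par d x = v \<or> x = v}"
    unfolding gdeg_def by (simp add: card_image)
  also have "{x \<in> {2..n}. par d x = v \<or> x = v} = {x \<in> {2..n}. par d x = v} \<union> {x \<in> {2..n}. x = v}" by auto
  also have "card \<dots> = card {x \<in> {2..n}. par d x = v} + card {x \<in> {2..n}. x = v}"
  proof (rule card_Un_disjoint)
    show "{x \<in> {2..n}. par d x = v} \<inter> {x \<in> {2..n}. x = v} = {}"
      using par_less[of _ d] by (auto simp del: One_nat_def) (metis less_irrefl par_less)
  qed auto
  also have "card {x \<in> {2..n}. x = v} = (if 2 \<le> v \<and> v \<le> n then 1 else 0)"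
  proof -
    have "{x \<in> {2..n}. x = v} = (if 2 \<le> v \<and> v \<le> n then {v} else {})" by auto
    then show ?thesis by simp
  qed
  finally show ?thesis .
qed

lemma least_par:
  assumes d: "2 \<le> d"
  shows "(LEAST v. v \<in> {1..Suc m} \<and> gdeg (Ed d (Suc m)) v \<le> d) = par d (Suc (Suc m))"
proof (rule Least_equality)
  let ?t = "Suc (Suc m)" let ?p = "par d ?t"
  have p1: "1 \<le> ?p" and pt: "?p < ?t" using par_ge1 par_less[of ?t d] by auto
  have sub: "{x \<in> {2..Suc m}. par d x = ?p} \<subseteq> {x. 2 \<le> x \<and> par d x = ?p} - {?t}" by auto
  have "card {x \<in> {2..Suc m}. par d x = ?p} \<le> card ({x. 2 \<le> x \<and> par d x = ?p} - {?t})"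
    by (rule card_mono[OF _ sub]) (use finite_children[OF d p1] in auto)
  also have "\<dots> = card {x. 2 \<le> x \<and> par d x = ?p} - 1"
    by (rule card_Diff_singleton) auto
  finally have "card {x \<in> {2..Suc m}. par d x = ?p} \<le> (if ?p = 1 then d + 1 else d) - 1"
    using card_children[OF d p1] by simp
  then show "?p \<in> {1..Suc m} \<and> gdeg (Ed d (Suc m)) ?p \<le> d"
    using p1 pt d by (auto simp: gdeg_Ed split: if_splits)
next
  fix y assume y: "y \<in> {1..Suc m} \<and> gdeg (Ed d (Suc m)) y \<le> d"
  let ?t = "Suc (Suc m)" let ?p = "par d ?t"
  show "?p \<le> y"
  proof (rule ccontr)
    assume "\<not> ?p \<le> y"
    then have yp: "y < ?p" by simp
    have le: "x \<le> Suc m" if "2 \<le> x" "par d x = y" for x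
    proof (rule ccontr)
      assume "\<not> x \<le> Suc m"
      then have "?t \<le> x" by auto
      then have "?p \<le> par d x" by (rule par_mono)
      then show False using yp \<open>par d x = y\<close> by simp
    qed
    have "{x \<in> {2..Suc m}. par d x = y} = {x. 2 \<le> x \<and> par d x = y}"
      using le by auto
    then have "gdeg (Ed d (Suc m)) y = (if y = 1 then d + 1 else d) + (if 2 \<le> y \<and> y \<le> Suc m then 1 else 0)"
      using card_children[OF d] y by (simp add: gdeg_Ed)
    then show False using y by (auto split: if_splits)
  qed
qed

lemma dendrimer_edges_Ed: "2 \<le> d \<Longrightarrow> dendrimer_edges d n = Ed d n"
proof (induction n rule: less_induct)
  case (less n)
  show ?case
  proof (cases n)
    case 0 then show ?thesis by (simp add: Ed_def)
  next
    case (Suc m)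
    show ?thesis
    proof (cases m)
      case 0 then show ?thesis using Suc by (simp add: Ed_def)
    next
      case (Suc m')
      have IH: "dendrimer_edges d (Suc m') = Ed d (Suc m')" using less Suc \<open>n = Suc m\<close> by simp
      have "dendrimer_edges d n = insert {par d (Suc (Suc m')), Suc (Suc m')} (Ed d (Suc m'))"
        using \<open>n = Suc m\<close> Suc IH least_par[OF less.prems, of m'] by (simp add: Let_def)
      also have "\<dots> = Ed d (Suc (Suc m'))"
        unfolding Ed_def by (auto simp: atLeastAtMostSuc_conv)
      finally show ?thesis using \<open>n = Suc m\<close> Suc by simp
    qed
  qed
qed

lemma adj_Ed: "(u, v) \<in> adj_rel (Ed d n) \<longleftrightarrow> (\<exists>x \<in> {2..n}. (u = par d x \<and> v = x) \<or> (u = x \<and> v = par d x))"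
proof -
  have "(u, v) \<in> adj_rel (Ed d n) \<longleftrightarrow> (\<exists>x \<in> {2..n}. {u, v} = {par d x, x}) \<and> u \<noteq> v"
    unfolding adj_rel_def Ed_def by auto
  also have "\<dots> \<longleftrightarrow> (\<exists>x \<in> {2..n}. (u = par d x \<and> v = x) \<or> (u = x \<and> v = par d x))"
    using par_less[of _ d] by (auto simp: doubleton_eq_iff) (metis less_irrefl)+
  finally show ?thesis .
qed

lemma walk_lower: "(u, v) \<in> adj_rel (Ed d n) ^^ k \<Longrightarrow> 1 \<le> u \<Longrightarrow> Dst d u v \<le> k"
proof (induction k arbitrary: v)
  case 0 then show ?case by simp
next
  case (Suc k)
  from Suc.prems(1) obtain y where uy: "(u, y) \<in> adj_rel (Ed d n) ^^ k" and yv: "(y, v) \<in> adj_rel (Ed d n)"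
    by (rule relpow_Suc_E)
  have IH: "Dst d u y \<le> k" using Suc.IH[OF uy Suc.prems(2)] .
  from yv obtain x where x: "x \<in> {2..n}" and c: "(y = par d x \<and> v = x) \<or> (y = x \<and> v = par d x)"
    by (auto simp: adj_Ed)
  have "Dst d (par d x) u = Suc (Dst d x u) \<or> Dst d x u = Suc (Dst d (par d x) u)"
    using Dst_par[of x u d] x Suc.prems(2) by auto
  then show ?case using c IH Dst_sym[of d u] by auto
qed

lemma walk_upper: "u \<in> {1..n} \<Longrightarrow> v \<in> {1..n} \<Longrightarrow> (u, v) \<in> adj_rel (Ed d n) ^^ (Dst d u v)"
proof (induction d u v rule: Dst.induct)
  case (1 d u v)
  show ?case
  proof (cases "u = v")
    case True then show ?thesis by simp
  next
    case False
    show ?thesis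
    proof (cases "v < u")
      case True
      then have u2: "2 \<le> u" using 1 by auto
      have "(par d u, v) \<in> adj_rel (Ed d n) ^^ Dst d (par d u) v"
        using 1(1)[OF False True] u2 1(3,4) par_less[OF u2, of d] par_ge1[of d u] by auto
      moreover have "(u, par d u) \<in> adj_rel (Ed d n)" using u2 1(3) by (auto simp: adj_Ed)
      ultimately have "(u, v) \<in> adj_rel (Ed d n) ^^ Suc (Dst d (par d u) v)"
        by (meson relpow_Suc_I2)
      then show ?thesis using True u2 by (simp only: Dst_gt)
    next
      case nt: False
      then have uv: "u < v" using False by simp
      then have v2: "2 \<le> v" using 1 by auto
      have "(u, par d v) \<in> adj_rel (Ed d n) ^^ Dst d u (par d v)"
        using 1(2)[OF False nt] v2 1(3,4) par_less[OF v2, of d] par_ge1[of d v] by auto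
      moreover have "(par d v, v) \<in> adj_rel (Ed d n)" using v2 1(4) by (auto simp: adj_Ed)
      ultimately have "(u, v) \<in> adj_rel (Ed d n) ^^ Suc (Dst d u (par d v))"
        by (meson relpow_Suc_I)
      then show ?thesis using uv v2 by (simp only: Dst_lt)
    qed
  qed
qed

lemma gdist_Ed: "u \<in> {1..n} \<Longrightarrow> v \<in> {1..n} \<Longrightarrow> gdist (Ed d n) u v = Dst d u v"
  unfolding gdist_def
  by (rule Least_equality) (auto intro: walk_upper dest: walk_lower)

definition cnt :: "nat \<Rightarrow> nat \<Rightarrow> nat \<Rightarrow> nat" where
  "cnt d n i = card {(u, v). u \<in> {1..n} \<and> v \<in> {1..n} \<and> u < v \<and> Dst d u v = i}"

lemma coeff_wiener: "finite V \<Longrightarrow> coeff (wiener_poly V E) i = card {(u, v). u \<in> V \<and> v \<in> V \<and> u < v \<and> gdist E u v = i}"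
proof -
  assume V: "finite V"
  let ?P = "{(u, v). u \<in> V \<and> v \<in> V \<and> u < v}"
  have fP: "finite ?P" by (rule finite_subset[of _ "V \<times> V"]) (use V in auto)
  have t: "coeff (case x of (u, v) \<Rightarrow> monom 1 (gdist E u v)) i = (if gdist E (fst x) (snd x) = i then 1 else 0)" for x
    by (cases x) (simp add: coeff_monom)
  have "coeff (wiener_poly V E) i = (\<Sum>x \<in> ?P. if gdist E (fst x) (snd x) = i then 1 else 0)"
    unfolding wiener_poly_def coeff_sum t ..
  also have "\<dots> = card {x \<in> ?P. gdist E (fst x) (snd x) = i}"
    using fP by (simp add: sum.If_cases) (rule arg_cong[where f=card], auto)
  also have "{x \<in> ?P. gdist E (fst x) (snd x) = i} = {(u, v). u \<in> V \<and> v \<in> V \<and> u < v \<and> gdist E u v = i}"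
    by auto
  finally show ?thesis .
qed

lemma coeff_W: "2 \<le> d \<Longrightarrow> coeff (dendrimer_W n d) i = cnt d n i"
proof -
  assume d: "2 \<le> d"
  have "coeff (dendrimer_W n d) i = card {(u, v). u \<in> {1..n} \<and> v \<in> {1..n} \<and> u < v \<and> gdist (Ed d n) u v = i}"
    unfolding dendrimer_W_def dendrimer_edges_Ed[OF d] by (simp add: coeff_wiener)
  also have "{(u, v). u \<in> {1..n} \<and> v \<in> {1..n} \<and> u < v \<and> gdist (Ed d n) u v = i}
     = {(u, v). u \<in> {1..n} \<and> v \<in> {1..n} \<and> u < v \<and> Dst d u v = i}"
    using gdist_Ed by auto
  finally show ?thesis unfolding cnt_def .
qed

definition Dl :: "nat \<Rightarrow> nat \<Rightarrow> nat \<Rightarrow> nat" where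
  "Dl d m i = card {u. 1 \<le> u \<and> u < m \<and> Dst d u m = i}"

lemma cnt_Suc: "cnt d (Suc n) i = cnt d n i + Dl d (Suc n) i"
proof -
  let ?A = "{(u, v). u \<in> {1..n} \<and> v \<in> {1..n} \<and> u < v \<and> Dst d u v = i}"
  let ?B = "(\<lambda>u. (u, Suc n)) ` {u. 1 \<le> u \<and> u < Suc n \<and> Dst d u (Suc n) = i}"
  have "{(u, v). u \<in> {1..Suc n} \<and> v \<in> {1..Suc n} \<and> u < v \<and> Dst d u v = i} = ?A \<union> ?B"
    by (auto simp: le_Suc_eq)
  moreover have "finite ?A" by (rule finite_subset[of _ "{1..n} \<times> {1..n}"]) auto
  moreover have "finite ?B" by auto
  moreover have "?A \<inter> ?B = {}" by auto
  moreover have "card ?B = Dl d (Suc n) i" unfolding Dl_def by (rule card_image) (auto simp: inj_on_def)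
  ultimately show ?thesis unfolding cnt_def by (simp add: card_Un_disjoint)
qed

lemma Dst_pos: "u \<noteq> v \<Longrightarrow> 1 \<le> u \<Longrightarrow> 1 \<le> v \<Longrightarrow> 0 < Dst d u v"
  by (subst Dst.simps) auto

lemma cnt_0: "cnt d n 0 = 0"
  unfolding cnt_def
proof -
  have e: "{(u, v). u \<in> {1..n} \<and> v \<in> {1..n} \<and> u < v \<and> Dst d u v = 0} = {}"
    using Dst_pos[of _ _ d] by (auto simp del: One_nat_def)
  show "card {(u, v). u \<in> {1..n} \<and> v \<in> {1..n} \<and> u < v \<and> Dst d u v = 0} = 0" by (subst e) simp
qed

definition Sg :: "nat \<Rightarrow> nat \<Rightarrow> nat" where "Sg d k = (\<Sum>i<k. d ^ i)"

lemma Sg_Suc: "Sg d (Suc k) = Sg d k + d ^ k" by (simp add: Sg_def)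
lemma Sg_0[simp]: "Sg d 0 = 0" by (simp add: Sg_def)
lemma Sg_Suc': "Sg d (Suc k) = 1 + d * Sg d k"
proof (induction k)
  case 0 then show ?case by (simp add: Sg_Suc)
next
  case (Suc k)
  have "Sg d (Suc (Suc k)) = Sg d (Suc k) + d ^ Suc k" by (rule Sg_Suc)
  also have "\<dots> = 1 + d * Sg d k + d * d ^ k" using Suc.IH by simp
  also have "\<dots> = 1 + d * Sg d (Suc k)" by (simp add: Sg_Suc algebra_simps)
  finally show ?case .
qed

lemma Sg_mult: "(d - 1) * Sg d k = d ^ k - 1"
proof (induction k)
  case 0 then show ?case by simp
next
  case (Suc k)
  show ?case
  proof (cases "d = 0")
    case True then show ?thesis by (simp add: Sg_Suc)
  next
    case False
    then have "1 \<le> d ^ k" by simp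
    then show ?thesis using Suc False by (simp add: Sg_Suc algebra_simps diff_mult_distrib)
  qed
qed

lemma Sg_div: "2 \<le> d \<Longrightarrow> (d ^ k - 1) div (d - 1) = Sg d k"
proof -
  assume "2 \<le> d"
  then have pos: "0 < d - 1" by simp
  have e: "d ^ k - 1 = (d - 1) * Sg d k" by (rule Sg_mult[symmetric])
  show ?thesis unfolding e using pos by simp
qed

fun Lv :: "nat \<Rightarrow> nat \<Rightarrow> nat" where
  "Lv d 0 = 1"
| "Lv d (Suc l) = 2 + (d + 1) * Sg d l"

fun Nl :: "nat \<Rightarrow> nat \<Rightarrow> nat" where
  "Nl d 0 = 1"
| "Nl d (Suc l) = (d + 1) * d ^ l"

lemma Lv_Suc: "Lv d (Suc l) = Lv d l + Nl d l"
  by (cases l) (auto simp: Sg_Suc algebra_simps)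

lemma Lv_1[simp]: "Lv d (Suc 0) = 2" by simp
declare Lv.simps(2)[simp del]

lemma Nl_pos: "1 \<le> d \<Longrightarrow> 0 < Nl d l" by (cases l) auto

lemma Lv_strict: "1 \<le> d \<Longrightarrow> a < b \<Longrightarrow> Lv d a < Lv d b"
proof (induction b)
  case 0 then show ?case by simp
next
  case (Suc b)
  then show ?case using Nl_pos[of d b] by (auto simp: Lv_Suc less_Suc_eq)
qed

lemma Lv_mono: "1 \<le> d \<Longrightarrow> a \<le> b \<Longrightarrow> Lv d a \<le> Lv d b"
  using Lv_strict[of d a b] by (cases "a = b") auto

lemma Lv_ge1: "1 \<le> Lv d l" by (cases l) (auto simp: Lv.simps)

lemma nk_Lv: "2 \<le> d \<Longrightarrow> nk d k = Lv d (Suc k)"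
  unfolding nk_def by (simp only: Sg_div) (simp add: Lv.simps)

lemma level_exists: "1 \<le> d \<Longrightarrow> 1 \<le> u \<Longrightarrow> \<exists>l. Lv d l \<le> u \<and> u < Lv d (Suc l)"
proof (induction u)
  case 0 then show ?case by simp
next
  case (Suc u)
  show ?case
  proof (cases "u = 0")
    case True then show ?thesis by (intro exI[of _ 0]) simp
  next
    case False
    then obtain l where l: "Lv d l \<le> u" "u < Lv d (Suc l)" using Suc by auto
    show ?thesis
    proof (cases "Suc u < Lv d (Suc l)")
      case True then show ?thesis using l by (intro exI[of _ l]) auto
    next
      case False
      then have "Suc u = Lv d (Suc l)" using l by simp
      then show ?thesis using Lv_strict[of d "Suc l" "Suc (Suc l)"] Suc.prems by (intro exI[of _ "Suc l"]) auto
    qed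
  qed
qed

lemma level_unique: "1 \<le> d \<Longrightarrow> Lv d a \<le> u \<Longrightarrow> u < Lv d (Suc a) \<Longrightarrow> Lv d b \<le> u \<Longrightarrow> u < Lv d (Suc b) \<Longrightarrow> a = b"
proof (rule ccontr)
  assume d: "1 \<le> d" and h: "Lv d a \<le> u" "u < Lv d (Suc a)" "Lv d b \<le> u" "u < Lv d (Suc b)" "a \<noteq> b"
  show False
  proof (cases "a < b")
    case True then have "Lv d (Suc a) \<le> Lv d b" using Lv_mono[OF d, of "Suc a" b] by simp
    then show False using h by simp
  next
    case False then have "Lv d (Suc b) \<le> Lv d a" using h Lv_mono[OF d, of "Suc b" a] by simp
    then show False using h by simp
  qed
qed

lemma Lv_rec: "2 \<le> d \<Longrightarrow> 1 \<le> k \<Longrightarrow> Lv d (Suc k) + d = d * Lv d k + 3"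
proof -
  assume d: "2 \<le> d" and k: "1 \<le> k"
  then obtain j where j: "k = Suc j" by (cases k) auto
  show ?thesis unfolding j by (simp add: Lv.simps Sg_Suc' algebra_simps)
qed

lemma Nl_Suc_mult: "1 \<le> k \<Longrightarrow> Nl d (Suc k) = d * Nl d k"
  by (cases k) (auto simp: algebra_simps)

lemma par_level:
  assumes d: "2 \<le> d" and k: "1 \<le> k"
  shows "par d (Lv d (Suc k) + y) = Lv d k + y div d"
proof -
  have "Lv d (Suc k) + y + d - 3 = d * Lv d k + y" using Lv_rec[OF d k] by simp
  then have "(Lv d (Suc k) + y + d - 3) div d = Lv d k + y div d" using d by simp
  then show ?thesis unfolding par_def using Lv_ge1[of d k] by simp
qed

lemma par_level1: "2 \<le> d \<Longrightarrow> y < d + 1 \<Longrightarrow> par d (Lv d 1 + y) = 1"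
  using par_eq1[of d "2 + y"] by simp

lemma Dst_two:
  assumes "u \<noteq> w" "2 \<le> u" "2 \<le> w" "par d u < w" "par d w < u"
  shows "Dst d u w = Suc (Suc (Dst d (par d u) (par d w)))"
proof (cases "w < u")
  case True then show ?thesis using assms by (simp add: Dst_gt Dst_lt)
next
  case False then have "u < w" using assms by simp
  then show ?thesis using assms by (simp add: Dst_gt Dst_lt)
qed

fun hh :: "nat \<Rightarrow> nat \<Rightarrow> nat \<Rightarrow> nat \<Rightarrow> nat" where
  "hh d 0 x y = 0"
| "hh d (Suc l) x y = (if x = y then 0 else Suc (hh d l (x div d) (y div d)))"

lemma hh_le: "hh d l x y \<le> l"
  by (induction l arbitrary: x y) auto

lemma hh_char: "0 < d \<Longrightarrow> hh d l x y \<le> s \<longleftrightarrow> (l \<le> s \<or> x div d ^ s = y div d ^ s)"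
proof (induction l arbitrary: x y s)
  case 0 then show ?case by simp
next
  case (Suc l)
  show ?case
  proof (cases "x = y")
    case True then show ?thesis by simp
  next
    case False
    show ?thesis
    proof (cases s)
      case 0 then show ?thesis using False by simp
    next
      case (Suc s')
      have "x div d ^ s = x div d div d ^ s'" "y div d ^ s = y div d div d ^ s'"
        unfolding Suc by (simp_all add: div_mult2_eq)
      then show ?thesis using Suc.IH[OF Suc.prems, of "x div d" "y div d" s'] False Suc by auto
    qed
  qed
qed

lemma same_level_Dst:
  assumes d: "2 \<le> d"
  shows "x < Nl d l \<Longrightarrow> y < Nl d l \<Longrightarrow> Dst d (Lv d l + x) (Lv d l + y) = 2 * hh d l x y"
proof (induction l arbitrary: x y)
  case 0 then show ?case by simp
next
  case (Suc l)
  show ?case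
  proof (cases "x = y")
    case True then show ?thesis by simp
  next
    case False
    let ?u = "Lv d (Suc l) + x" and ?w = "Lv d (Suc l) + y"
    have "Lv d 1 \<le> Lv d (Suc l)" using Lv_mono[of d 1 "Suc l"] d by simp
    then have u2: "2 \<le> ?u" "2 \<le> ?w" by simp_all
    show ?thesis
    proof (cases l)
      case 0
      have p: "par d ?u = 1" "par d ?w = 1" using par_level1[OF d] Suc.prems 0 by auto
      have "Dst d ?u ?w = 2" using Dst_two[of ?u ?w d] u2 p False by simp
      then show ?thesis using 0 False by simp
    next
      case (Suc j)
      then have l1: "1 \<le> l" by simp
      have p: "par d ?u = Lv d l + x div d" "par d ?w = Lv d l + y div d"
        using par_level[OF d l1] by auto
      have xd: "x div d < Nl d l" "y div d < Nl d l"
        using Suc.prems Nl_Suc_mult[OF l1, of d] d by (auto simp: div_less_iff_less_mult mult.commute)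
      have lt: "Lv d l + x div d < Lv d (Suc l)" "Lv d l + y div d < Lv d (Suc l)"
        using xd by (simp_all add: Lv_Suc)
      have "Dst d ?u ?w = Suc (Suc (Dst d (par d ?u) (par d ?w)))"
        by (rule Dst_two) (use u2 p lt False in auto)
      then show ?thesis using Suc.IH[OF xd] p False by simp
    qed
  qed
qed

lemma card_div_eq: "0 < (B::nat) \<Longrightarrow> card {x. x < N \<and> x div B = Q} = min N (Q * B + B) - Q * B"
proof -
  assume B: "0 < B"
  have "{x. x < N \<and> x div B = Q} = {Q * B ..< min N (Q * B + B)}"
    using B by (auto simp: div_eq_iff_nat)
  then show ?thesis by simp
qed

lemma dvd_block: "(B::nat) dvd N \<Longrightarrow> y < N \<Longrightarrow> 0 < B \<Longrightarrow> (y div B) * B + B \<le> N"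
proof -
  assume "B dvd N" "y < N" "0 < B"
  then obtain c where c: "N = B * c" by (auto elim: dvdE)
  have "y div B < c" using \<open>y < N\<close> \<open>0 < B\<close> c by (simp add: div_less_iff_less_mult mult.commute)
  then have "Suc (y div B) * B \<le> c * B" by (intro mult_le_mono1) simp
  then show ?thesis using c by (simp add: mult.commute)
qed

lemma cnt_le_full:
  assumes d: "2 \<le> d" and l: "1 \<le> l" and y: "y < Nl d l" and s: "s < l"
  shows "card {x. x < Nl d l \<and> hh d l x y \<le> s} = d ^ s"
proof -
  have B: "0 < d ^ s" using d by simp
  have "{x. x < Nl d l \<and> hh d l x y \<le> s} = {x. x < Nl d l \<and> x div d ^ s = y div d ^ s}"
    using hh_char[of d l _ y s] d s by auto
  moreover have "d ^ s dvd Nl d l"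
  proof -
    obtain j where j: "l = Suc j" using l by (cases l) auto
    have "d ^ s dvd d ^ j" using s j by (simp add: le_imp_power_dvd)
    then show ?thesis using j by simp
  qed
  then have "(y div d ^ s) * d ^ s + d ^ s \<le> Nl d l" using dvd_block y B by blast
  ultimately show ?thesis using card_div_eq[OF B, of "Nl d l" "y div d ^ s"] by simp
qed

lemma card_hh_full:
  assumes d: "2 \<le> d" and y: "y < Nl d l"
  shows "card {x. x < Nl d l \<and> hh d l x y = s} =
    (if s = 0 then 1 else if s < l then d ^ s - d ^ (s - 1) else if s = l then d ^ l else 0)"
proof (cases "l = 0")
  case True
  then have "{x. x < Nl d l \<and> hh d l x y = s} = (if s = 0 then {0} else {})" by auto
  then show ?thesis using True by simp
next
  case False
  then have l: "1 \<le> l" by simp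
  show ?thesis
  proof (cases s)
    case 0
    have "{x. x < Nl d l \<and> hh d l x y = s} = {x. x < Nl d l \<and> hh d l x y \<le> 0}" using 0 by auto
    then show ?thesis using cnt_le_full[OF d l y, of 0] l 0 by simp
  next
    case (Suc s')
    have eq: "{x. x < Nl d l \<and> hh d l x y = s} = {x. x < Nl d l \<and> hh d l x y \<le> s} - {x. x < Nl d l \<and> hh d l x y \<le> s'}"
      using Suc by auto
    have sub: "{x. x < Nl d l \<and> hh d l x y \<le> s'} \<subseteq> {x. x < Nl d l \<and> hh d l x y \<le> s}" using Suc by auto
    have fin: "finite {x. x < Nl d l \<and> hh d l x y \<le> s'}" by simp
    have c': "card {x. x < Nl d l \<and> hh d l x y \<le> s'} = d ^ s'" if "s' < l" using cnt_le_full[OF d l y that] .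
    show ?thesis
    proof (cases "s < l")
      case True
      then show ?thesis using eq card_Diff_subset[OF fin sub] cnt_le_full[OF d l y True] c' Suc by simp
    next
      case nl: False
      show ?thesis
      proof (cases "s = l")
        case True
        have all: "{x. x < Nl d l \<and> hh d l x y \<le> s} = {..<Nl d l}" using hh_le[of d l] True by auto
        obtain j where j: "l = Suc j" using l by (cases l) auto
        have "card {x. x < Nl d l \<and> hh d l x y = s} = Nl d l - d ^ s'"
          using eq card_Diff_subset[OF fin sub] all c' True Suc by simp
        also have "\<dots> = d ^ l" using j True Suc by (simp add: algebra_simps)
        finally show ?thesis using True Suc by simp
      next
        case False
        then have "{x. x < Nl d l \<and> hh d l x y = s} = {}" using nl hh_le[of d l] by (auto simp: not_less) (metis le_antisym)
        then show ?thesis using nl False Suc by simp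
      qed
    qed
  qed
qed

lemma cnt_le_part:
  assumes d: "2 \<le> d"
  shows "card {x. x < p \<and> hh d l x p \<le> s} = (if l \<le> s then p else p mod d ^ s)"
proof (cases "l \<le> s")
  case True
  then have "{x. x < p \<and> hh d l x p \<le> s} = {..<p}" using hh_le[of d l] by (auto intro: le_trans)
  then show ?thesis using True by simp
next
  case False
  have B: "0 < d ^ s" using d by simp
  have "{x. x < p \<and> hh d l x p \<le> s} = {x. x < p \<and> x div d ^ s = p div d ^ s}"
    using hh_char[of d l _ p s] d False by auto
  moreover have "min p ((p div d ^ s) * d ^ s + d ^ s) = p"
  proof -
    have "p < (p div d ^ s) * d ^ s + d ^ s" using B
      by (metis add.commute add_less_cancel_left div_mult_mod_eq mod_less_divisor)
    then show ?thesis by simp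
  qed
  ultimately show ?thesis using card_div_eq[OF B, of p "p div d ^ s"] False
    by (simp add: minus_div_mult_eq_mod)
qed

lemma card_hh_part:
  assumes d: "2 \<le> d" and l: "1 \<le> l"
  shows "card {x. x < p \<and> hh d l x p = s} =
    (if s = 0 then 0 else (if l \<le> s then p else p mod d ^ s) - (if l \<le> s - 1 then p else p mod d ^ (s - 1)))"
proof (cases s)
  case 0
  then have "{x. x < p \<and> hh d l x p = s} = {x. x < p \<and> hh d l x p \<le> 0}" by auto
  then show ?thesis using cnt_le_part[OF d, of p l 0] 0 l by simp
next
  case (Suc s')
  have eq: "{x. x < p \<and> hh d l x p = s} = {x. x < p \<and> hh d l x p \<le> s} - {x. x < p \<and> hh d l x p \<le> s'}"
    using Suc by auto
  have sub: "{x. x < p \<and> hh d l x p \<le> s'} \<subseteq> {x. x < p \<and> hh d l x p \<le> s}" using Suc by auto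
  have fin: "finite {x. x < p \<and> hh d l x p \<le> s'}" by simp
  show ?thesis using eq card_Diff_subset[OF fin sub] cnt_le_part[OF d, of p l s] cnt_le_part[OF d, of p l s'] Suc
    by simp
qed

definition FL :: "nat \<Rightarrow> nat \<Rightarrow> nat \<Rightarrow> nat \<Rightarrow> nat" where
  "FL d k m i = card {u. 1 \<le> u \<and> u < Lv d (Suc k) \<and> Dst d u m = i}"

lemma Lv_ge2: "1 \<le> d \<Longrightarrow> 2 \<le> Lv d (Suc k)"
  using Lv_mono[of d 1 "Suc k"] by simp

lemma FL_eq:
  assumes d: "2 \<le> d"
  shows "p < Nl d (Suc k) \<Longrightarrow> FL d k (Lv d (Suc k) + p) i = (if 1 \<le> i \<and> i \<le> 2 * k + 1 then d ^ ((i - 1) div 2) else 0)"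
proof (induction k arbitrary: p i)
  case 0
  have pm: "par d (2 + p) = 1" using par_level1[OF d, of p] 0 by simp
  have "Dst d 1 (2 + p) = 1" using pm by (simp add: Dst_lt)
  moreover have "{u. 1 \<le> u \<and> u < Lv d (Suc 0)} = {1::nat}" by auto
  ultimately have "{u. 1 \<le> u \<and> u < Lv d (Suc 0) \<and> Dst d u (Lv d (Suc 0) + p) = i} = (if i = 1 then {1} else {})"
    by (smt (verit, ccfv_SIG) Collect_cong Collect_empty_eq Lv_1 add_2_eq_Suc' mem_Collect_eq singleton_conv)
  then show ?case unfolding FL_def by simp
next
  case (Suc k)
  let ?m = "Lv d (Suc (Suc k)) + p"
  let ?pm = "Lv d (Suc k) + p div d"
  have k1: "1 \<le> Suc k" by simp
  have pm: "par d ?m = ?pm" using par_level[OF d k1] .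
  have pd: "p div d < Nl d (Suc k)"
    using Suc.prems Nl_Suc_mult[OF k1, of d] d by (auto simp: div_less_iff_less_mult mult.commute)
  have m2: "2 \<le> ?m" using Lv_ge2[of d "Suc k"] d by simp
  have L12: "Lv d (Suc k) \<le> Lv d (Suc (Suc k))" using Lv_mono[of d "Suc k" "Suc (Suc k)"] d by simp
  have Dm: "Dst d u ?m = Suc (Dst d u ?pm)" if "u < Lv d (Suc (Suc k))" for u
    using Dst_lt[of u ?m d] that m2 pm by simp
  define A where "A = {u. 1 \<le> u \<and> u < Lv d (Suc k) \<and> Dst d u ?m = i}"
  define B where "B = {u. Lv d (Suc k) \<le> u \<and> u < Lv d (Suc (Suc k)) \<and> Dst d u ?m = i}"
  have split: "{u. 1 \<le> u \<and> u < Lv d (Suc (Suc k)) \<and> Dst d u ?m = i} = A \<union> B"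
    unfolding A_def B_def using L12 Lv_ge1[of d "Suc k"] by auto
  have disj: "A \<inter> B = {}" unfolding A_def B_def by auto
  have cA: "card A = (if i = 0 then 0 else FL d k ?pm (i - 1))"
  proof (cases i)
    case 0
    then have "A = {}" unfolding A_def using Dm L12 by fastforce
    then show ?thesis using 0 by simp
  next
    case (Suc i')
    have "A = {u. 1 \<le> u \<and> u < Lv d (Suc k) \<and> Dst d u ?pm = i'}"
      unfolding A_def using Dm L12 Suc by fastforce
    then show ?thesis unfolding FL_def using Suc by simp
  qed
  have cB: "card B = card {x. x < Nl d (Suc k) \<and> Suc (2 * hh d (Suc k) x (p div d)) = i}"
  proof -
    have "B = (\<lambda>x. Lv d (Suc k) + x) ` {x. x < Nl d (Suc k) \<and> Suc (2 * hh d (Suc k) x (p div d)) = i}"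
    proof (intro equalityI subsetI)
      fix u assume u: "u \<in> B"
      define x where "x = u - Lv d (Suc k)"
      have ux: "u = Lv d (Suc k) + x" and xl: "x < Nl d (Suc k)" using u unfolding B_def x_def by (auto simp: Lv_Suc)
      have "Dst d u ?m = Suc (2 * hh d (Suc k) x (p div d))"
        using Dm[of u] u same_level_Dst[OF d xl pd] ux unfolding B_def by simp
      then show "u \<in> (\<lambda>x. Lv d (Suc k) + x) ` {x. x < Nl d (Suc k) \<and> Suc (2 * hh d (Suc k) x (p div d)) = i}"
        using u xl ux unfolding B_def by auto
    next
      fix u assume "u \<in> (\<lambda>x. Lv d (Suc k) + x) ` {x. x < Nl d (Suc k) \<and> Suc (2 * hh d (Suc k) x (p div d)) = i}"
      then obtain x where x: "x < Nl d (Suc k)" "Suc (2 * hh d (Suc k) x (p div d)) = i" and ux: "u = Lv d (Suc k) + x" by auto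
      have lt: "u < Lv d (Suc (Suc k))" using ux x by (simp add: Lv_Suc[of d "Suc k"])
      have "Dst d u ?m = Suc (2 * hh d (Suc k) x (p div d))"
        using Dm[OF lt] same_level_Dst[OF d x(1) pd] ux by simp
      then show "u \<in> B" unfolding B_def using ux lt x by simp
    qed
    then show ?thesis by (simp add: card_image inj_on_def)
  qed
  have cB2: "card B = (if odd i then (let s = (i - 1) div 2 in
      (if s = 0 then 1 else if s < Suc k then d ^ s - d ^ (s - 1) else if s = Suc k then d ^ Suc k else 0)) else 0)"
  proof (cases "odd i")
    case True
    then obtain s where s: "i = Suc (2 * s)" by (metis oddE add.commute plus_1_eq_Suc)
    have "{x. x < Nl d (Suc k) \<and> Suc (2 * hh d (Suc k) x (p div d)) = i} = {x. x < Nl d (Suc k) \<and> hh d (Suc k) x (p div d) = s}"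
      using s by auto
    then show ?thesis using cB card_hh_full[OF d pd, of s] s True by (simp add: Let_def)
  next
    case False
    then have "{x. x < Nl d (Suc k) \<and> Suc (2 * hh d (Suc k) x (p div d)) = i} = {}" by auto
    then show ?thesis using cB False by simp
  qed
  have "FL d (Suc k) ?m i = card A + card B"
    unfolding FL_def split by (rule card_Un_disjoint) (use disj in \<open>auto simp: A_def B_def\<close>)
  also have "\<dots> = (if 1 \<le> i \<and> i \<le> 2 * Suc k + 1 then d ^ ((i - 1) div 2) else 0)"
  proof (cases i)
    case 0 then show ?thesis using cA cB2 by simp
  next
    case (Suc i')
    have IH: "FL d k ?pm i' = (if 1 \<le> i' \<and> i' \<le> 2 * k + 1 then d ^ ((i' - 1) div 2) else 0)"
      using Suc.IH[OF pd] .
    show ?thesis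
    proof (cases "even i'")
      case True
      then obtain s where s: "i' = 2 * s" by auto
      have ps: "0 < s \<Longrightarrow> d ^ (s - 1) \<le> d ^ s" using d by (simp add: power_increasing)
      have "card A + card B = (if 1 \<le> 2 * s \<and> 2 * s \<le> 2 * k + 1 then d ^ ((2 * s - 1) div 2) else 0) +
        (if s = 0 then 1 else if s < Suc k then d ^ s - d ^ (s - 1) else if s = Suc k then d ^ Suc k else 0)"
        using cA cB2 IH Suc s by (simp add: Let_def)
      also have "\<dots> = (if 2 * s \<le> 2 * k + 2 then d ^ s else 0)"
      proof -
        have e: "(2 * s - 1) div 2 = s - 1" by (cases s) auto
        show ?thesis
        proof (cases "s = Suc k")
          case True then show ?thesis unfolding e by simp
        next
          case False then show ?thesis using ps unfolding e by auto
        qed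
      qed
      finally show ?thesis using Suc s by simp
    next
      case False
      then obtain s where s: "i' = Suc (2 * s)" by (metis oddE add.commute plus_1_eq_Suc)
      have "card A + card B = (if 2 * s + 1 \<le> 2 * k + 1 then d ^ s else 0)"
        using cA cB2 IH Suc s by (simp add: Let_def)
      then show ?thesis using Suc s by simp
    qed
  qed
  finally show ?case .
qed

lemma Dl_eq:
  assumes d: "2 \<le> d" and p: "p < Nl d (Suc k)"
  shows "Dl d (Lv d (Suc k) + p) i = FL d k (Lv d (Suc k) + p) i + card {x. x < p \<and> 2 * hh d (Suc k) x p = i}"
proof -
  let ?m = "Lv d (Suc k) + p"
  define A where "A = {u. 1 \<le> u \<and> u < Lv d (Suc k) \<and> Dst d u ?m = i}"
  define B where "B = (\<lambda>x. Lv d (Suc k) + x) ` {x. x < p \<and> 2 * hh d (Suc k) x p = i}"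
  have "{u. 1 \<le> u \<and> u < ?m \<and> Dst d u ?m = i} = A \<union> B"
  proof (intro equalityI subsetI)
    fix u assume u: "u \<in> {u. 1 \<le> u \<and> u < ?m \<and> Dst d u ?m = i}"
    show "u \<in> A \<union> B"
    proof (cases "u < Lv d (Suc k)")
      case True then show ?thesis using u unfolding A_def by auto
    next
      case False
      define x where "x = u - Lv d (Suc k)"
      have ux: "u = Lv d (Suc k) + x" "x < p" using u False unfolding x_def by auto
      have "Dst d u ?m = 2 * hh d (Suc k) x p" using same_level_Dst[OF d, of x "Suc k" p] ux p by simp
      then show ?thesis using u ux unfolding B_def by auto
    qed
  next
    fix u assume "u \<in> A \<union> B"
    then show "u \<in> {u. 1 \<le> u \<and> u < ?m \<and> Dst d u ?m = i}"
    proof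
      assume "u \<in> A" then show ?thesis unfolding A_def by auto
    next
      assume "u \<in> B"
      then obtain x where x: "x < p" "2 * hh d (Suc k) x p = i" and ux: "u = Lv d (Suc k) + x" unfolding B_def by auto
      have "Dst d u ?m = 2 * hh d (Suc k) x p" using same_level_Dst[OF d, of x "Suc k" p] ux p x by simp
      then show ?thesis using x ux Lv_ge1[of d "Suc k"] by auto
    qed
  qed
  moreover have "A \<inter> B = {}" unfolding A_def B_def by auto
  moreover have "finite A" "finite B" unfolding A_def B_def by auto
  moreover have "card B = card {x. x < p \<and> 2 * hh d (Suc k) x p = i}" unfolding B_def by (simp add: card_image inj_on_def)
  ultimately show ?thesis unfolding Dl_def FL_def A_def by (simp add: card_Un_disjoint)
qed

lemma mod_diff_bound:
  assumes B: "0 < (B::nat)" and d: "0 < d"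
  shows "p mod (d * B) - p mod B \<le> d * B - B"
proof -
  let ?a = "p mod (d * B)"
  have a: "?a < d * B" using B d by simp
  have m: "p mod B = ?a mod B" by (simp add: mod_mod_cancel)
  have "?a - ?a mod B = (?a div B) * B" by (simp add: minus_mod_eq_div_mult)
  moreover have "?a div B < d" using a B by (simp add: div_less_iff_less_mult)
  then have "(?a div B) * B \<le> (d - 1) * B" by (intro mult_le_mono1) simp
  ultimately show ?thesis using m by (simp add: diff_mult_distrib)
qed

lemma E_eq:
  assumes d: "2 \<le> d"
  shows "card {x. x < p \<and> 2 * hh d (Suc k) x p = i} = (if even i then
     (let s = i div 2 in if s = 0 then 0 else (if Suc k \<le> s then p else p mod d ^ s) - (if Suc k \<le> s - 1 then p else p mod d ^ (s - 1)))
     else 0)"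
proof (cases "even i")
  case True
  then have "{x. x < p \<and> 2 * hh d (Suc k) x p = i} = {x. x < p \<and> hh d (Suc k) x p = i div 2}" by auto
  then show ?thesis using card_hh_part[OF d, of "Suc k" p "i div 2"] True by (simp add: Let_def)
next
  case False
  then have "{x. x < p \<and> 2 * hh d (Suc k) x p = i} = {}" by auto
  then show ?thesis using False by simp
qed

locale vtx =
  fixes d k p
  assumes d: "2 \<le> d" and p: "p < Nl d (Suc k)"
begin

abbreviation "m \<equiv> Lv d (Suc k) + p"

lemma Dl_formula: "Dl d m i = (if 1 \<le> i \<and> i \<le> 2 * k + 1 then d ^ ((i - 1) div 2) else 0) +
   (if even i then
     (let s = i div 2 in if s = 0 then 0 else (if Suc k \<le> s then p else p mod d ^ s) - (if Suc k \<le> s - 1 then p else p mod d ^ (s - 1)))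
     else 0)"
  using Dl_eq[OF d p, of i] FL_eq[OF d p, of i] E_eq[OF d, of p k i] by simp

lemma Dl_odd: "Dl d m (Suc (2 * s)) = (if s \<le> k then d ^ s else 0)"
  using Dl_formula[of "Suc (2 * s)"] by simp

lemma Dl_even: "Dl d m (2 * s) = (if 1 \<le> s \<and> s \<le> k then d ^ (s - 1) else 0) +
   (if s = 0 then 0 else (if Suc k \<le> s then p else p mod d ^ s) - (if Suc k \<le> s - 1 then p else p mod d ^ (s - 1)))"
proof -
  have e: "(2 * s - 1) div 2 = s - 1" by (cases s) auto
  show ?thesis using Dl_formula[of "2 * s"] unfolding e by (simp add: Let_def)
qed

lemma Dl_0: "Dl d m 0 = 0"
  using Dl_even[of 0] by simp

lemma Dl_top1: "Dl d m (2 * k + 1) = d ^ k"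
  using Dl_odd[of k] by simp

lemma Dl_top2: "Dl d m (2 * k + 2) = (p div d ^ k) * d ^ k"
proof -
  have "Dl d m (2 * Suc k) = p - p mod d ^ k" using Dl_even[of "Suc k"] by simp
  also have "\<dots> = (p div d ^ k) * d ^ k" by (simp add: minus_mod_eq_div_mult)
  finally show ?thesis by simp
qed

lemma Dl_2k: "1 \<le> k \<Longrightarrow> Dl d m (2 * k) = d ^ (k - 1) + (p mod d ^ k - p mod d ^ (k - 1))"
  using Dl_even[of k] by simp

lemma Dl_zero: "2 * k + 3 \<le> i \<Longrightarrow> Dl d m i = 0"
proof (cases "even i")
  case True
  then obtain s where s: "i = 2 * s" by auto
  assume "2 * k + 3 \<le> i"
  then have "Suc (Suc k) \<le> s" using s by simp
  then show ?thesis using Dl_even[of s] s by simp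
next
  case False
  then obtain s where s: "i = Suc (2 * s)" by (metis oddE add.commute plus_1_eq_Suc)
  assume "2 * k + 3 \<le> i"
  then show ?thesis using Dl_odd[of s] s by simp
qed

lemma Dl_mono: "i < 2 * k \<Longrightarrow> Dl d m i \<le> Dl d m (Suc i)"
proof (cases "even i")
  case True
  then obtain s where s: "i = 2 * s" by auto
  assume ik: "i < 2 * k"
  show ?thesis
  proof (cases "s = 0")
    case True then show ?thesis using s Dl_0 by simp
  next
    case False
    then obtain t where t: "s = Suc t" by (cases s) auto
    have sk: "s < k" using ik s by simp
    have b: "p mod (d * d ^ t) - p mod d ^ t \<le> d * d ^ t - d ^ t"
      by (rule mod_diff_bound) (use d in auto)
    have "Dl d m i = d ^ t + (p mod (d * d ^ t) - p mod d ^ t)"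
      using Dl_even[of s] s t sk by simp
    also have "\<dots> \<le> d * d ^ t" using b by (metis add_le_cancel_left diff_le_mono2 le_add_diff_inverse2 le_refl
          add_diff_inverse_nat le_add1 mult_le_mono1 one_le_numeral d le_trans nat_mult_1 not_less)
    also have "\<dots> = Dl d m (Suc i)" using Dl_odd[of s] s t sk by simp
    finally show ?thesis .
  qed
next
  case False
  then obtain s where s: "i = Suc (2 * s)" by (metis oddE add.commute plus_1_eq_Suc)
  assume ik: "i < 2 * k"
  then have "s < k" using s by simp
  have "Dl d m i = d ^ s" using Dl_odd[of s] s \<open>s < k\<close> by simp
  also have "\<dots> \<le> Dl d m (2 * Suc s)" using Dl_even[of "Suc s"] \<open>s < k\<close> by simp
  finally show ?thesis using s by simp
qed

end

definition Inv :: "nat \<Rightarrow> nat \<Rightarrow> nat \<Rightarrow> bool" where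
  "Inv d k p \<longleftrightarrow> (let n = Lv d (Suc k) + p in
     (\<forall>i<2 * k. cnt d n i \<le> cnt d n (Suc i)) \<and>
     (\<forall>i. 2 * k + 3 \<le> i \<longrightarrow> cnt d n i = 0) \<and>
     cnt d n (2 * k + 1) = Suc p * d ^ k \<and>
     cnt d n (2 * k + 2) = (\<Sum>x<Suc p. (x div d ^ k) * d ^ k) \<and>
     (1 \<le> k \<longrightarrow> cnt d n (2 * k) = (\<Sum>x<Nl d k. (x div d ^ (k - 1)) * d ^ (k - 1)) + Suc p * d ^ (k - 1)
        + (\<Sum>x<Suc p. x mod d ^ k - x mod d ^ (k - 1))))"

lemma cnt_zero_n: "cnt d 0 i = 0" unfolding cnt_def by simp

lemma Dl_1: "Dl d 1 i = 0" unfolding Dl_def by simp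

lemma Inv_base: "2 \<le> d \<Longrightarrow> Inv d 0 0"
proof -
  assume d: "2 \<le> d"
  interpret v: vtx d 0 0 using d Nl_pos[of d "Suc 0"] by unfold_locales simp_all
  have c: "cnt d 2 i = Dl d 2 i" for i
    using cnt_Suc[of d 1 i] cnt_Suc[of d 0 i] cnt_zero_n[of d i] Dl_1[of d i] by (simp add: numeral_2_eq_2)
  show ?thesis unfolding Inv_def Let_def using c v.Dl_zero v.Dl_top1 v.Dl_top2 by simp
qed

lemma Inv_step:
  assumes d: "2 \<le> d" and p: "Suc p < Nl d (Suc k)" and I: "Inv d k p"
  shows "Inv d k (Suc p)"
proof -
  interpret v: vtx d k "Suc p" using d p by unfold_locales simp
  let ?n = "Lv d (Suc k) + p"
  have c: "cnt d (Lv d (Suc k) + Suc p) i = cnt d ?n i + Dl d (Lv d (Suc k) + Suc p) i" for i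
    using cnt_Suc[of d ?n i] by simp
  note I' = I[unfolded Inv_def Let_def]
  have "\<forall>i<2 * k. cnt d (Lv d (Suc k) + Suc p) i \<le> cnt d (Lv d (Suc k) + Suc p) (Suc i)"
    using I' v.Dl_mono unfolding c by (simp add: add_mono)
  moreover have "\<forall>i. 2 * k + 3 \<le> i \<longrightarrow> cnt d (Lv d (Suc k) + Suc p) i = 0"
    using I' v.Dl_zero unfolding c by simp
  moreover have "cnt d (Lv d (Suc k) + Suc p) (2 * k + 1) = Suc (Suc p) * d ^ k"
    using I' v.Dl_top1 unfolding c by simp
  moreover have "cnt d (Lv d (Suc k) + Suc p) (2 * k + 2) = (\<Sum>x<Suc (Suc p). (x div d ^ k) * d ^ k)"
    using I' v.Dl_top2 unfolding c by simp
  moreover have "1 \<le> k \<longrightarrow> cnt d (Lv d (Suc k) + Suc p) (2 * k) = (\<Sum>x<Nl d k. (x div d ^ (k - 1)) * d ^ (k - 1)) + Suc (Suc p) * d ^ (k - 1)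
        + (\<Sum>x<Suc (Suc p). x mod d ^ k - x mod d ^ (k - 1))"
    using I' v.Dl_2k unfolding c by simp
  ultimately show ?thesis unfolding Inv_def Let_def by blast
qed

lemma sum_split:
  fixes f :: "nat \<Rightarrow> nat"
  shows "(\<Sum>x<a + b. f x) = (\<Sum>x<a. f x) + (\<Sum>x<b. f (a + x))"
  by (induction b) (simp_all add: add.assoc)

lemma sum_div_blocks: "0 < (B::nat) \<Longrightarrow> 2 * (\<Sum>x<a * B. x div B) = a * (a - 1) * B"
proof (induction a)
  case 0 then show ?case by simp
next
  case (Suc a)
  have e: "(\<Sum>x<B. (a * B + x) div B) = B * a"
  proof -
    have "(\<Sum>x<B. (a * B + x) div B) = (\<Sum>x<B. a)"
      by (rule sum.cong) (use Suc.prems in auto)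
    then show ?thesis by simp
  qed
  have "Suc a * B = a * B + B" by simp
  then have "(\<Sum>x<Suc a * B. x div B) = (\<Sum>x<a * B + B. x div B)" by (simp only:)
  also have "\<dots> = (\<Sum>x<a * B. x div B) + (\<Sum>x<B. (a * B + x) div B)"
    by (rule sum_split)
  finally have "(\<Sum>x<Suc a * B. x div B) = (\<Sum>x<a * B. x div B) + (\<Sum>x<B. (a * B + x) div B)" .
  then have "2 * (\<Sum>x<Suc a * B. x div B) = a * (a - 1) * B + 2 * (B * a)" using Suc e by simp
  also have "\<dots> = Suc a * (Suc a - 1) * B" by (cases a) (simp_all add: algebra_simps)
  finally show ?case .
qed

lemma KEY2_aux: "0 < (D::nat) \<Longrightarrow> 3 * D \<le> r \<Longrightarrow> r \<le> (\<Sum>x<r. x div D)"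
proof -
  assume D: "0 < D" and r: "3 * D \<le> r"
  obtain t where t: "r = 3 * D + t" using r by (metis le_add_diff_inverse)
  have base: "3 * D \<le> (\<Sum>x<3 * D. x div D)"
  proof -
    have e3: "3 * D = (D + D) + D" by simp
    have "(\<Sum>x<3 * D. x div D) = (\<Sum>x<(D + D) + D. x div D)" unfolding e3 ..
    also have "\<dots> = (\<Sum>x<D + D. x div D) + (\<Sum>x<D. (D + D + x) div D)" by (rule sum_split)
    also have "(\<Sum>x<D + D. x div D) = (\<Sum>x<D. x div D) + (\<Sum>x<D. (D + x) div D)" by (rule sum_split)
    finally have eq: "(\<Sum>x<3 * D. x div D) = (\<Sum>x<D. x div D) + (\<Sum>x<D. (D + x) div D) + (\<Sum>x<D. (D + D + x) div D)" .
    have "(\<Sum>x<D. (1::nat)) \<le> (\<Sum>x<D. (D + x) div D)"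
      by (rule sum_mono) (use D in \<open>simp add: less_eq_div_iff_mult_less_eq\<close>)
    moreover have "(\<Sum>x<D. (2::nat)) \<le> (\<Sum>x<D. (D + D + x) div D)"
      by (rule sum_mono) (use D in \<open>simp add: less_eq_div_iff_mult_less_eq\<close>)
    ultimately show ?thesis unfolding eq by simp
  qed
  have "3 * D + t \<le> (\<Sum>x<3 * D + t. x div D)"
  proof (induction t)
    case 0 then show ?case using base by simp
  next
    case (Suc t)
    have "1 \<le> (3 * D + t) div D" using D by (simp add: less_eq_div_iff_mult_less_eq)
    then show ?case using Suc by simp
  qed
  then show ?thesis using t by simp
qed

lemma KEY2: "0 < (D::nat) \<Longrightarrow> 3 * D \<le> r \<Longrightarrow> r * D \<le> (\<Sum>x<r. (x div D) * D)"
  using KEY2_aux[of D r] by (simp add: sum_distrib_right[symmetric])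

lemma KEY1:
  assumes d: "2 \<le> (d::nat)" and B: "0 < B" and r: "3 * (d * B) \<le> r"
  shows "(\<Sum>x<(d + 1) * B. (x div B) * B) + r * B + (\<Sum>x<r. x mod (d * B) - x mod B) \<le> r * (d * B)"
proof -
  let ?D = "d * B"
  let ?f = "\<lambda>x. x mod (d * B) - x mod B"
  obtain t where t: "r = 3 * ?D + t" using r by (metis le_add_diff_inverse)
  have perc: "?f (c * ?D + x) = ?f x" for c x
  proof -
    have "(c * ?D + x) mod B = x mod B"
      using mod_mult_self2[of x B "c * d"] by (simp add: algebra_simps)
    moreover have "(c * ?D + x) mod ?D = x mod ?D"
      using mod_mult_self2[of x ?D c] by (simp add: algebra_simps)
    ultimately show ?thesis by simp
  qed
  have per: "?f (?D + x) = ?f x" for x using perc[of 1 x] by simp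
  have per2: "?f (2 * ?D + x) = ?f x" for x using perc[of 2 x] by simp
  have S0: "2 * (\<Sum>x<?D. ?f x) = B * (d * (d - 1) * B)"
  proof -
    have "(\<Sum>x<?D. ?f x) = (\<Sum>x<?D. (x div B) * B)"
      by (rule sum.cong) (auto simp: minus_mod_eq_div_mult)
    also have "\<dots> = B * (\<Sum>x<?D. x div B)" by (simp add: sum_distrib_left mult.commute)
    finally show ?thesis using sum_div_blocks[OF B, of d] by simp
  qed
  have S3: "(\<Sum>x<3 * ?D. ?f x) = 3 * (\<Sum>x<?D. ?f x)"
  proof -
    have e3: "3 * ?D = (?D + ?D) + ?D" by simp
    have "(\<Sum>x<3 * ?D. ?f x) = (\<Sum>x<(?D + ?D) + ?D. ?f x)" unfolding e3 ..
    also have "\<dots> = (\<Sum>x<?D + ?D. ?f x) + (\<Sum>x<?D. ?f (?D + ?D + x))" by (rule sum_split)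
    also have "(\<Sum>x<?D + ?D. ?f x) = (\<Sum>x<?D. ?f x) + (\<Sum>x<?D. ?f (?D + x))" by (rule sum_split)
    finally have eq: "(\<Sum>x<3 * ?D. ?f x) = (\<Sum>x<?D. ?f x) + (\<Sum>x<?D. ?f (?D + x)) + (\<Sum>x<?D. ?f (?D + ?D + x))" .
    have "?D + ?D = 2 * ?D" by simp
    then show ?thesis unfolding eq using per per2 by (simp only:)
  qed
  have tail: "(\<Sum>x<t. ?f (3 * ?D + x)) \<le> t * (?D - B)"
  proof -
    have "(\<Sum>x<t. ?f (3 * ?D + x)) \<le> (\<Sum>x<t. ?D - B)"
      by (rule sum_mono) (rule mod_diff_bound, use B d in auto)
    then show ?thesis by simp
  qed
  have Cz: "2 * (\<Sum>x<(d + 1) * B. (x div B) * B) = B * ((d + 1) * d * B)"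
  proof -
    have "(\<Sum>x<(d + 1) * B. (x div B) * B) = B * (\<Sum>x<(d + 1) * B. x div B)"
      by (simp add: sum_distrib_left mult.commute)
    then show ?thesis using sum_div_blocks[OF B, of "d + 1"] by simp
  qed
  have fr: "(\<Sum>x<r. ?f x) = 3 * (\<Sum>x<?D. ?f x) + (\<Sum>x<t. ?f (3 * ?D + x))"
    using sum_split[where a="3 * ?D" and b=t and f="?f"] S3 t by simp
  obtain e where e: "d = e + 2" using d by (metis add.commute le_Suc_ex add_2_eq_Suc')
  have d1: "d - 1 = e + 1" using e by simp
  have P: "B * ((d + 1) * d * B) + 2 * (r * B) + 3 * (B * (d * (d - 1) * B)) + 2 * (t * (d - 1) * B) \<le> 2 * (r * (d * B))"
  proof -
    have "2 * (r * (d * B)) = (B * ((d + 1) * d * B) + 2 * (r * B) + 3 * (B * (d * (d - 1) * B)) + 2 * (t * (d - 1) * B)) + 2 * B * B * e * (e + 2)"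
      unfolding d1 t unfolding e by (simp add: algebra_simps)
    then show ?thesis by linarith
  qed
  have tl2: "2 * (\<Sum>x<t. ?f (3 * ?D + x)) \<le> 2 * (t * (d - 1) * B)"
    using tail by (simp add: diff_mult_distrib algebra_simps)
  have S0': "2 * (3 * (\<Sum>x<?D. ?f x)) = 3 * (B * (d * (d - 1) * B))" using S0 by simp
  have "2 * ((\<Sum>x<(d + 1) * B. (x div B) * B) + r * B + (\<Sum>x<r. ?f x)) \<le> 2 * (r * (d * B))"
  proof -
    have lin: "\<And>a b c e1 X Y Z W V::nat. 2 * a = X \<Longrightarrow> 2 * (3 * b) = Y \<Longrightarrow> c = 3 * b + e1 \<Longrightarrow> 2 * e1 \<le> Z
       \<Longrightarrow> X + 2 * W + Y + Z \<le> V \<Longrightarrow> 2 * (a + W + c) \<le> V" by simp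
    show ?thesis by (rule lin[OF Cz S0' fr tl2 P])
  qed
  then show ?thesis by simp
qed

lemma Inv_top:
  assumes d: "2 \<le> d" and I: "Inv d k p" and r: "3 * d ^ k \<le> Suc p"
  shows "cnt d (Lv d (Suc k) + p) (2 * k) \<le> cnt d (Lv d (Suc k) + p) (2 * k + 1)
       \<and> cnt d (Lv d (Suc k) + p) (2 * k + 1) \<le> cnt d (Lv d (Suc k) + p) (2 * k + 2)"
proof -
  let ?n = "Lv d (Suc k) + p"
  note I' = I[unfolded Inv_def Let_def]
  have D: "0 < d ^ k" using d by simp
  have A: "cnt d ?n (2 * k + 1) \<le> cnt d ?n (2 * k + 2)"
    using I' KEY2[OF D r] by simp
  have B: "cnt d ?n (2 * k) \<le> cnt d ?n (2 * k + 1)"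
  proof (cases k)
    case 0 then show ?thesis using cnt_0[of d ?n] by simp
  next
    case (Suc j)
    have B0: "0 < d ^ j" using d by simp
    have dk: "d ^ k = d * d ^ j" using Suc by simp
    have Nk: "Nl d k = (d + 1) * d ^ j" using Suc by simp
    have "cnt d ?n (2 * k) = (\<Sum>x<(d + 1) * d ^ j. (x div d ^ j) * d ^ j) + Suc p * d ^ j
        + (\<Sum>x<Suc p. x mod (d * d ^ j) - x mod d ^ j)"
      using I' Suc Nk dk by simp
    also have "\<dots> \<le> Suc p * (d * d ^ j)"
      by (rule KEY1[OF d B0]) (use r dk in simp)
    also have "\<dots> = cnt d ?n (2 * k + 1)" using I' dk by simp
    finally show ?thesis .
  qed
  show ?thesis using A B by simp
qed

lemma Inv_trans:
  assumes d: "2 \<le> d" and I: "Inv d k (Nl d (Suc k) - 1)"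
  shows "Inv d (Suc k) 0"
proof -
  let ?P = "Nl d (Suc k) - 1"
  have NP: "Suc ?P = Nl d (Suc k)" using Nl_pos[of d "Suc k"] d by simp
  let ?n = "Lv d (Suc k) + ?P"
  have nn: "Suc ?n = Lv d (Suc (Suc k)) + 0" using NP by (simp add: Lv_Suc[of d "Suc k"])
  interpret v: vtx d "Suc k" 0 using d Nl_pos[of d "Suc (Suc k)"] by unfold_locales simp_all
  have c: "cnt d (Lv d (Suc (Suc k)) + 0) i = cnt d ?n i + Dl d (Lv d (Suc (Suc k)) + 0) i" for i
    using cnt_Suc[of d ?n i] nn by simp
  note I' = I[unfolded Inv_def Let_def]
  have r3: "3 * d ^ k \<le> Suc ?P" using NP d by simp
  have top: "cnt d ?n (2 * k) \<le> cnt d ?n (2 * k + 1) \<and> cnt d ?n (2 * k + 1) \<le> cnt d ?n (2 * k + 2)"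
    using Inv_top[OF d I r3] .
  have mono_old: "cnt d ?n i \<le> cnt d ?n (Suc i)" if "i < 2 * Suc k" for i
  proof -
    have "i < 2 * k + 2" using that by simp
    then have "i < 2 * k \<or> i = 2 * k \<or> i = 2 * k + 1" by linarith
    then show ?thesis
    proof (elim disjE)
      assume "i < 2 * k" then show ?thesis using I' by simp
    next
      assume "i = 2 * k" then show ?thesis using top by simp
    next
      assume "i = 2 * k + 1" then show ?thesis using top by simp
    qed
  qed
  have "\<forall>i<2 * Suc k. cnt d (Lv d (Suc (Suc k)) + 0) i \<le> cnt d (Lv d (Suc (Suc k)) + 0) (Suc i)"
    using mono_old v.Dl_mono unfolding c by (simp add: add_mono)
  moreover have "\<forall>i. 2 * Suc k + 3 \<le> i \<longrightarrow> cnt d (Lv d (Suc (Suc k)) + 0) i = 0"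
    using I' v.Dl_zero unfolding c by simp
  moreover have "cnt d (Lv d (Suc (Suc k)) + 0) (2 * Suc k + 1) = Suc 0 * d ^ Suc k"
    using I' v.Dl_top1 unfolding c by simp
  moreover have "cnt d (Lv d (Suc (Suc k)) + 0) (2 * Suc k + 2) = (\<Sum>x<Suc 0. (x div d ^ Suc k) * d ^ Suc k)"
    using I' v.Dl_top2 unfolding c by simp
  moreover have "cnt d (Lv d (Suc (Suc k)) + 0) (2 * Suc k) = (\<Sum>x<Nl d (Suc k). (x div d ^ (Suc k - 1)) * d ^ (Suc k - 1)) + Suc 0 * d ^ (Suc k - 1)
        + (\<Sum>x<Suc 0. x mod d ^ Suc k - x mod d ^ (Suc k - 1))"
  proof -
    have "cnt d ?n (2 * k + 2) = (\<Sum>x<Suc ?P. (x div d ^ k) * d ^ k)" using I' by (simp del: sum.lessThan_Suc)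
    also have "\<dots> = (\<Sum>x<Nl d (Suc k). (x div d ^ k) * d ^ k)" unfolding NP ..
    finally have "cnt d ?n (2 * k + 2) = (\<Sum>x<Nl d (Suc k). (x div d ^ k) * d ^ k)" .
    then show ?thesis using v.Dl_2k unfolding c by simp
  qed
  ultimately show ?thesis unfolding Inv_def Let_def by simp
qed

lemma Inv_all: "2 \<le> d \<Longrightarrow> p < Nl d (Suc k) \<Longrightarrow> Inv d k p"
proof (induction k arbitrary: p)
  case 0
  have "Inv d 0 q" if "q < Nl d (Suc 0)" for q
    using that
  proof (induction q)
    case 0 then show ?case using Inv_base[OF \<open>2 \<le> d\<close>] by simp
  next
    case (Suc q) then show ?case using Inv_step[OF \<open>2 \<le> d\<close>] by simp
  qed
  then show ?case using 0 by simp
next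
  case (Suc k)
  have pos: "0 < Nl d (Suc k)" using Nl_pos[of d "Suc k"] Suc.prems by simp
  have I0: "Inv d (Suc k) 0" using Inv_trans[OF Suc.prems(1) Suc.IH[OF Suc.prems(1)]] pos by simp
  have "Inv d (Suc k) q" if "q < Nl d (Suc (Suc k))" for q
    using that
  proof (induction q)
    case 0 then show ?case using I0 by simp
  next
    case (Suc q) then show ?case using Inv_step[OF \<open>2 \<le> d\<close>] by simp
  qed
  then show ?case using Suc.prems by simp
qed

lemma pk_eq: "2 \<le> d \<Longrightarrow> pk d k = Lv d (Suc k) + 3 * d ^ k - 1"
proof -
  assume d: "2 \<le> d"
  obtain e where e: "d = e + 2" using d by (metis add.commute le_Suc_ex add_2_eq_Suc')
  have m: "(e + 1) * Sg d k + 1 = d ^ k"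
    using Sg_mult[of d k] e d by (simp add: Suc_le_eq)
  have "pk d k = 3 + 2 * d * Sg d k + 2 * d ^ k - 1"
    unfolding pk_def mk_def using Sg_div[OF d] by simp
  also have "\<dots> = Lv d (Suc k) + 3 * d ^ k - 1"
    unfolding e using m[unfolded e] by (simp add: Lv.simps algebra_simps)
  finally show ?thesis .
qed

lemma chain_le: "(\<forall>i<j. a i \<le> a (Suc i)) \<Longrightarrow> m \<le> j \<Longrightarrow> a m \<le> (a j :: nat)"
proof (induction j)
  case 0 then show ?case by simp
next
  case (Suc j)
  show ?case
  proof (cases "m = Suc j")
    case True then show ?thesis by simp
  next
    case False
    then have "a m \<le> a j" using Suc by simp
    also have "\<dots> \<le> a (Suc j)" using Suc.prems by simp
    finally show ?thesis .
  qed
qed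

lemma KEY3: "0 < (D::nat) \<Longrightarrow> r \<le> 3 * D \<Longrightarrow> (\<Sum>x<r. x div D) = (r - D) + (r - 2 * D)"
proof (induction r)
  case 0 then show ?case by simp
next
  case (Suc r)
  have IH: "(\<Sum>x<r. x div D) = (r - D) + (r - 2 * D)" using Suc by simp
  have "r div D = (if r < D then 0 else if r < 2 * D then 1 else 2)"
  proof -
    have "r < 3 * D" using Suc.prems by simp
    then show ?thesis using Suc.prems(1)
      by (auto simp: div_eq_iff_nat not_less)
  qed
  then show ?case using IH by auto
qed

lemma shape:
  fixes a :: "nat \<Rightarrow> nat"
  assumes H1: "\<forall>i<K. a i \<le> a (Suc i)" and H2: "\<forall>i. K + 3 \<le> i \<longrightarrow> a i = 0"
  shows "a (K + 2) \<le> a (K + 1) \<Longrightarrow> unimodal a \<and> ((\<forall>m. a m \<le> a K) \<or> (\<forall>m. a m \<le> a (K + 1)))"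
    and "a K \<le> a (K + 1) \<Longrightarrow> a (K + 1) \<le> a (K + 2) \<Longrightarrow> unimodal a \<and> (\<forall>m. a m \<le> a (K + 2)) \<and> (\<forall>i<K + 2. a i \<le> a (Suc i))"
proof -
  assume h: "a (K + 2) \<le> a (K + 1)"
  show "unimodal a \<and> ((\<forall>m. a m \<le> a K) \<or> (\<forall>m. a m \<le> a (K + 1)))"
  proof (cases "a K \<le> a (K + 1)")
    case True
    have up: "\<forall>i<K + 1. a i \<le> a (Suc i)" using H1 True by (auto simp: less_Suc_eq)
    have down: "\<forall>i\<ge>K + 1. a (Suc i) \<le> a i"
    proof (intro allI impI)
      fix i assume "K + 1 \<le> i"
      then consider "i = K + 1" | "K + 2 \<le> i" by linarith
      then show "a (Suc i) \<le> a i"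
      proof cases
        case 1 then show ?thesis using h by simp
      next
        case 2 then show ?thesis using H2 by simp
      qed
    qed
    have mx: "\<forall>m. a m \<le> a (K + 1)"
    proof
      fix m
      show "a m \<le> a (K + 1)"
      proof (cases "m \<le> K + 1")
        case True then show ?thesis using chain_le[OF up True] by simp
      next
        case False
        then consider "m = K + 2" | "K + 3 \<le> m" by linarith
        then show ?thesis using h H2 by cases auto
      qed
    qed
    show ?thesis unfolding unimodal_def using up down mx by blast
  next
    case nle: False
    have down: "\<forall>i\<ge>K. a (Suc i) \<le> a i"
    proof (intro allI impI)
      fix i assume "K \<le> i"
      then consider "i = K" | "i = K + 1" | "K + 2 \<le> i" by linarith
      then show "a (Suc i) \<le> a i"
      proof cases
        case 1 then show ?thesis using nle by simp
      next
        case 2 then show ?thesis using h by simp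
      next
        case 3 then show ?thesis using H2 by simp
      qed
    qed
    have mx: "\<forall>m. a m \<le> a K"
    proof
      fix m
      show "a m \<le> a K"
      proof (cases "m \<le> K")
        case True then show ?thesis using chain_le[OF H1 True] by simp
      next
        case False
        then consider "m = K + 1" | "m = K + 2" | "K + 3 \<le> m" by linarith
        then show ?thesis using h H2 nle by cases auto
      qed
    qed
    show ?thesis unfolding unimodal_def using H1 down mx by blast
  qed
next
  assume h1: "a K \<le> a (K + 1)" and h2: "a (K + 1) \<le> a (K + 2)"
  have up: "\<forall>i<K + 2. a i \<le> a (Suc i)"
  proof (intro allI impI)
    fix i assume "i < K + 2"
    then consider "i < K" | "i = K" | "i = K + 1" by linarith
    then show "a i \<le> a (Suc i)" using H1 h1 h2 by cases auto
  qed
  have down: "\<forall>i\<ge>K + 2. a (Suc i) \<le> a i" using H2 by simp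
  have mx: "\<forall>m. a m \<le> a (K + 2)"
  proof
    fix m
    show "a m \<le> a (K + 2)"
    proof (cases "m \<le> K + 2")
      case True then show ?thesis using chain_le[OF up True] by simp
    next
      case False then show ?thesis using H2 by simp
    qed
  qed
  show "unimodal a \<and> (\<forall>m. a m \<le> a (K + 2)) \<and> (\<forall>i<K + 2. a i \<le> a (Suc i))"
    unfolding unimodal_def using up down mx by blast
qed

theorem theorem3p3:
  fixes d n :: nat
  assumes "d \<ge> 2" and "n \<ge> 2"
  shows "unimodal (coeff (dendrimer_W n d))
    \<and> (\<forall>k. nk d k \<le> n \<and> n < pk d k \<longrightarrow>
          is_max_coeff (dendrimer_W n d) (2 * k) \<or> is_max_coeff (dendrimer_W n d) (2 * k + 1))
    \<and> (\<forall>k. pk d k \<le> n \<and> n < nk d (k + 1) \<longrightarrow>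
          is_max_coeff (dendrimer_W n d) (2 * k + 2)
          \<and> (\<forall>i < 2 * k + 2. coeff (dendrimer_W n d) i \<le> coeff (dendrimer_W n d) (Suc i)))"
proof -
  have d: "2 \<le> d" and n2: "2 \<le> n" using assms by auto
  have d1: "1 \<le> d" using d by simp
  obtain l where l: "Lv d l \<le> n" "n < Lv d (Suc l)" using level_exists[OF d1, of n] n2 by auto
  have "l \<noteq> 0"
  proof
    assume "l = 0"
    then have "n < Lv d (Suc 0)" using l by simp
    then show False using n2 by simp
  qed
  then obtain k where k: "l = Suc k" by (cases l) auto
  define p where "p = n - Lv d (Suc k)"
  have np: "n = Lv d (Suc k) + p" using l k unfolding p_def by simp
  have pN: "p < Nl d (Suc k)" using l k np by (simp add: Lv_Suc[of d "Suc k"])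
  have I: "Inv d k p" using Inv_all[OF d pN] .
  note I' = I[unfolded Inv_def Let_def, folded np]
  have cf: "coeff (dendrimer_W n d) = cnt d n" using coeff_W[OF d] by (intro ext) simp
  have mx: "is_max_coeff (dendrimer_W n d) j \<longleftrightarrow> (\<forall>m. cnt d n m \<le> cnt d n j)" for j
    unfolding is_max_coeff_def cf ..
  let ?a = "cnt d n" and ?K = "2 * k"
  have H1: "\<forall>i<?K. ?a i \<le> ?a (Suc i)" using I' by simp
  have H2: "\<forall>i. ?K + 3 \<le> i \<longrightarrow> ?a i = 0" using I' by simp
  have D: "0 < d ^ k" using d by simp
  have F1: "?a (?K + 2) \<le> ?a (?K + 1)" if r: "Suc p < 3 * d ^ k"
  proof -
    have "?a (?K + 2) = (\<Sum>x<Suc p. (x div d ^ k) * d ^ k)" using I' by (simp del: sum.lessThan_Suc)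
    also have "\<dots> = (\<Sum>x<Suc p. x div d ^ k) * d ^ k" by (rule sum_distrib_right[symmetric])
    also have "(\<Sum>x<Suc p. x div d ^ k) = (Suc p - d ^ k) + (Suc p - 2 * d ^ k)"
      using KEY3[OF D, of "Suc p"] r by simp
    also have "(Suc p - d ^ k) + (Suc p - 2 * d ^ k) \<le> Suc p" using r by linarith
    then have "((Suc p - d ^ k) + (Suc p - 2 * d ^ k)) * d ^ k \<le> Suc p * d ^ k" by (rule mult_le_mono1)
    also have "Suc p * d ^ k = ?a (?K + 1)" using I' by simp
    finally show ?thesis by simp
  qed
  have F2: "?a ?K \<le> ?a (?K + 1) \<and> ?a (?K + 1) \<le> ?a (?K + 2)" if r: "3 * d ^ k \<le> Suc p"
    using Inv_top[OF d I r] np by simp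
  have lvl: "k' = k" if "nk d k' \<le> n" "n < nk d (k' + 1)" for k'
  proof -
    have "Lv d (Suc k') \<le> n" "n < Lv d (Suc (Suc k'))" using that nk_Lv[OF d] by auto
    then have "Suc k' = Suc k" using level_unique[OF d1] l k by blast
    then show ?thesis by simp
  qed
  have pk_le: "pk d k' \<le> nk d (k' + 1)" for k'
  proof -
    have "2 * d ^ k' \<le> d * d ^ k'" using d by (rule mult_le_mono1)
    then have h: "3 * d ^ k' \<le> d ^ k' + d * d ^ k'" by linarith
    have "pk d k' = Lv d (Suc k') + 3 * d ^ k' - 1" using pk_eq[OF d, of k'] .
    moreover have "nk d (k' + 1) = Lv d (Suc k') + (d ^ k' + d * d ^ k')"
      using nk_Lv[OF d, of "k' + 1"] Lv_Suc[of d "Suc k'"] by simp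
    ultimately show ?thesis using h by linarith
  qed
  have nk_pk: "nk d k' \<le> pk d k'" for k'
  proof -
    have "1 \<le> d ^ k'" using d by simp
    then show ?thesis using pk_eq[OF d, of k'] nk_Lv[OF d, of k'] by linarith
  qed
  have pkk: "n < pk d k \<longleftrightarrow> Suc p < 3 * d ^ k"
    using pk_eq[OF d, of k] np D by auto
  have U: "unimodal ?a"
  proof (cases "Suc p < 3 * d ^ k")
    case True then show ?thesis using shape(1)[OF H1 H2 F1] by blast
  next
    case False then show ?thesis using shape(2)[OF H1 H2] F2 by simp
  qed
  have C2: "\<forall>k'. nk d k' \<le> n \<and> n < pk d k' \<longrightarrow>
          is_max_coeff (dendrimer_W n d) (2 * k') \<or> is_max_coeff (dendrimer_W n d) (2 * k' + 1)"
  proof (intro allI impI)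
    fix k' assume h: "nk d k' \<le> n \<and> n < pk d k'"
    then have "k' = k" using lvl pk_le[of k'] by (meson less_le_trans)
    then have r: "Suc p < 3 * d ^ k" using h pkk by simp
    show "is_max_coeff (dendrimer_W n d) (2 * k') \<or> is_max_coeff (dendrimer_W n d) (2 * k' + 1)"
      unfolding mx using shape(1)[OF H1 H2 F1[OF r]] \<open>k' = k\<close> by simp
  qed
  have C3: "\<forall>k'. pk d k' \<le> n \<and> n < nk d (k' + 1) \<longrightarrow>
          is_max_coeff (dendrimer_W n d) (2 * k' + 2)
          \<and> (\<forall>i < 2 * k' + 2. coeff (dendrimer_W n d) i \<le> coeff (dendrimer_W n d) (Suc i))"
  proof (intro allI impI)
    fix k' assume h: "pk d k' \<le> n \<and> n < nk d (k' + 1)"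
    then have "k' = k" using lvl nk_pk[of k'] by (meson le_trans)
    then have r: "3 * d ^ k \<le> Suc p" using h pkk by simp
    have "?a ?K \<le> ?a (?K + 1)" "?a (?K + 1) \<le> ?a (?K + 2)" using F2[OF r] by auto
    from shape(2)[OF H1 H2 this]
    show "is_max_coeff (dendrimer_W n d) (2 * k' + 2)
          \<and> (\<forall>i < 2 * k' + 2. coeff (dendrimer_W n d) i \<le> coeff (dendrimer_W n d) (Suc i))"
      unfolding mx cf using \<open>k' = k\<close> by simp
  qed
  show ?thesis using U C2 C3 unfolding cf by blast
qed


end
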